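(* In the $K$-tier network model described in the context with $W=0$ and fixed target $\beta>0$, regard the interference-limited outage probability $\mathcal O_k^{int}=\mathbb P\{P_k\|\mathbf h\|^2X_k^{-\alpha_k}/I_o<\beta\}$ of a typical user associated with tier $k$ as a function of the access threshold $\epsilon$, all other parameters fixed. Then $\lim_{\epsilon\to\infty}\mathcal O_k^{int}=0$ for every $k\in\mathcal K$.
   Context: Network model: $\mathcal K=\{1,\dots,K\}$. In $\mathbb R^2$, tier-$k$ BSs form a homogeneous PPP of intensity $\lambda_k>0$ and users a homogeneous PPP of intensity $\lambda_u>0$, all independent. Tier-$k$ BSs have transmit power $P_k>0$, $M_k\in\mathbb N$ antennas, bias $B_k>0$, path-loss exponent $\alpha_k>2$. $\Omega_k=P_kM_kB_k$, $\delta_k=2/\alpha_k$, $\Omega_{j,k}=\Omega_j/\Omega_k$, $\delta_{j,k}=\delta_j/\delta_k$. Access threshold $\epsilon>0$, $R_k=(\Omega_k/\epsilon)^{1/\alpha_k}$. Association: with $D_k$ the distance from a typical user to its nearest tier-$k$ BS, $\hat\rho_k=\Omega_kD_k^{-\alpha_k}$ if $D_k\le R_k$, else $0$; the user is associated with tier $k$ iff $\hat\rho_k>\hat\rho_j$ for all $j\ne k$, with probability $\mathcal T_k=\pi\lambda_k\int_0^{R_k^2}\exp(-\pi\sum_j\lambda_j\Omega_{j,k}^{\delta_j}r^{\delta_{j,k}})dr$. Activation probability of tier $j$: $\mathcal A_j=1-\exp\big(-\pi\lambda_u\int_0^{R_j^2}\exp(-\pi\sum_l\lambda_l\Omega_{l,j}^{\delta_l}r^{\delta_{l,j}})dr\big)$;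 active tier-$j$ BSs are modeled as a homogeneous PPP of intensity $\mathcal A_j\lambda_j$. SINR model: conditional on association with tier $k$, the serving distance $X_k$ has density $\frac{2\pi\lambda_k}{\mathcal T_k}x\exp(-\pi\sum_j\lambda_j\Omega_{j,k}^{\delta_j}x^{2\delta_{j,k}})$ on $(0,R_k]$; given $X_k$, interferers of tier $j$ are the points of independent homogeneous PPPs of intensity $\mathcal A_j\lambda_j$ outside the disk around the user of radius $\Omega_{j,k}^{1/\alpha_j}X_k^{\alpha_k/\alpha_j}$; the signal gain $\|\mathbf h\|^2\sim\mathrm{Gamma}(M_k,1)$, an interferer of tier $j$ at distance $r$ contributes $P_jVr^{-\alpha_j}$ with $V\sim\mathrm{Exp}(1)$, all fading independent of each other and of the point processes; $I_o$ is the total interference. Note $R_k$, $\mathcal T_k$, $\mathcal A_j$ all depend on $\epsilon$. *)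

theory Defs
  imports "HOL-Probability.Probability"
begin

text \<open>Tiers are indexed by the set {1..K}. Om j is the biased received-power weight
  Omega_j = P_j M_j B_j.\<close>

definition Omg :: "(nat \<Rightarrow> real) \<Rightarrow> (nat \<Rightarrow> nat) \<Rightarrow> (nat \<Rightarrow> real) \<Rightarrow> nat \<Rightarrow> real" where
  "Omg P Mn Bs j = P j * real (Mn j) * Bs j"

definition accR :: "(nat \<Rightarrow> real) \<Rightarrow> (nat \<Rightarrow> real) \<Rightarrow> real \<Rightarrow> nat \<Rightarrow> real" where
  "accR Om al eps j = (Om j / eps) powr (1 / al j)"

definition gfun :: "nat \<Rightarrow> (nat \<Rightarrow> real) \<Rightarrow> (nat \<Rightarrow> real) \<Rightarrow> (nat \<Rightarrow> real) \<Rightarrow> nat \<Rightarrow> real \<Rightarrow> real" where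
  "gfun K lam Om al k r =
     exp (- (pi * (\<Sum>l\<in>{1..K}. lam l * (Om l / Om k) powr (2 / al l) * r powr ((2 / al l) / (2 / al k)))))"

definition assocT :: "nat \<Rightarrow> (nat \<Rightarrow> real) \<Rightarrow> (nat \<Rightarrow> real) \<Rightarrow> (nat \<Rightarrow> real) \<Rightarrow> real \<Rightarrow> nat \<Rightarrow> real" where
  "assocT K lam Om al eps k = pi * lam k * integral {0..(accR Om al eps k)\<^sup>2} (gfun K lam Om al k)"

definition actA :: "nat \<Rightarrow> (nat \<Rightarrow> real) \<Rightarrow> real \<Rightarrow> (nat \<Rightarrow> real) \<Rightarrow> (nat \<Rightarrow> real) \<Rightarrow> real \<Rightarrow> nat \<Rightarrow> real" where
  "actA K lam lu Om al eps j =
     1 - exp (- (pi * lu * integral {0..(accR Om al eps j)\<^sup>2} (gfun K lam Om al j)))"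

text \<open>Density of the serving distance X_k conditional on association with tier k.\<close>
definition servDens :: "nat \<Rightarrow> (nat \<Rightarrow> real) \<Rightarrow> (nat \<Rightarrow> real) \<Rightarrow> (nat \<Rightarrow> real) \<Rightarrow> real \<Rightarrow> nat \<Rightarrow> real \<Rightarrow> real" where
  "servDens K lam Om al eps k x =
     (if 0 < x \<and> x \<le> accR Om al eps k
      then 2 * pi * lam k / assocT K lam Om al eps k * x * gfun K lam Om al k (x\<^sup>2)
      else 0)"

text \<open>Radius of the interference-free disk for tier j when the serving distance is x.\<close>
definition drad :: "(nat \<Rightarrow> real) \<Rightarrow> (nat \<Rightarrow> real) \<Rightarrow> nat \<Rightarrow> nat \<Rightarrow> real \<Rightarrow> real" where
  "drad Om al k j x = (Om j / Om k) powr (1 / al j) * x powr (al k / al j)"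

text \<open>Homogeneous PPP of intensity mu on R^2 (points indexed by a measurable enumeration p n):
  counts in bounded Borel sets are Poisson with mean mu * area, and counts in disjoint
  bounded Borel sets are independent.\<close>
definition hppp :: "'w measure \<Rightarrow> real \<Rightarrow> (nat \<Rightarrow> 'w \<Rightarrow> real \<times> real) \<Rightarrow> bool" where
  "hppp M mu p \<longleftrightarrow>
     (\<forall>n. p n \<in> M \<rightarrow>\<^sub>M borel) \<and>
     (\<forall>\<omega>\<in>space M. inj (\<lambda>n. p n \<omega>)) \<and>
     (\<forall>B. B \<in> sets borel \<and> bounded B \<longrightarrow>
        (\<forall>\<omega>\<in>space M. finite {n. p n \<omega> \<in> B}) \<and>
        (\<forall>m::nat. measure M {\<omega>\<in>space M. card {n. p n \<omega> \<in> B} = m}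
            = exp (- (mu * measure lborel B)) * (mu * measure lborel B) ^ m / fact m)) \<and>
     (\<forall>(F::nat set) (Bs :: nat \<Rightarrow> (real \<times> real) set).
        finite F \<and> (\<forall>i\<in>F. Bs i \<in> sets borel \<and> bounded (Bs i)) \<and> disjoint_family_on Bs F \<longrightarrow>
        prob_space.indep_vars M (\<lambda>_. count_space UNIV) (\<lambda>i \<omega>. card {n. p n \<omega> \<in> Bs i}) F)"

text \<open>Components of the model that are mutually independent: serving distance,
  signal gain, the point process of each tier, and each interferer fading mark.\<close>
datatype comp = cX | cG | cP nat | cV nat nat

definition gen_sets :: "'w measure \<Rightarrow> ('w \<Rightarrow> 'b) \<Rightarrow> 'b measure \<Rightarrow> 'w set set" where
  "gen_sets M Y N = {Y -` A \<inter> space M | A. A \<in> sets N}"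

definition comp_sets :: "'w measure \<Rightarrow> ('w \<Rightarrow> real) \<Rightarrow> ('w \<Rightarrow> real)
    \<Rightarrow> (nat \<Rightarrow> nat \<Rightarrow> 'w \<Rightarrow> real \<times> real) \<Rightarrow> (nat \<Rightarrow> nat \<Rightarrow> 'w \<Rightarrow> real) \<Rightarrow> comp \<Rightarrow> 'w set set" where
  "comp_sets M X G p V c = (case c of
      cX \<Rightarrow> gen_sets M X borel
    | cG \<Rightarrow> gen_sets M G borel
    | cP j \<Rightarrow> gen_sets M (\<lambda>\<omega> n. p j n \<omega>) (PiM UNIV (\<lambda>_. borel))
    | cV j n \<Rightarrow> gen_sets M (V j n) borel)"

definition comp_idx :: "nat \<Rightarrow> comp set" where
  "comp_idx K = {cX, cG} \<union> cP ` {1..K} \<union> (\<lambda>(j, n). cV j n) ` ({1..K} \<times> UNIV)"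

text \<open>Total interference I_o (ennreal-valued, may a priori be infinite): tier-j interferers
  are the points of the tier-j PPP outside the disk of radius drad, each contributing
  P_j V r^(-alpha_j).\<close>
definition interf :: "nat \<Rightarrow> (nat \<Rightarrow> real) \<Rightarrow> (nat \<Rightarrow> real) \<Rightarrow> (nat \<Rightarrow> real) \<Rightarrow> nat
    \<Rightarrow> (nat \<Rightarrow> nat \<Rightarrow> 'w \<Rightarrow> real \<times> real) \<Rightarrow> (nat \<Rightarrow> nat \<Rightarrow> 'w \<Rightarrow> real) \<Rightarrow> ('w \<Rightarrow> real) \<Rightarrow> 'w \<Rightarrow> ennreal" where
  "interf K P Om al k p V X \<omega> =
     (\<Sum>j\<in>{1..K}. \<Sum>n. if drad Om al k j (X \<omega>) < norm (p j n \<omega>)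
        then ennreal (P j * V j n \<omega> * norm (p j n \<omega>) powr (- al j)) else 0)"

definition sir_model :: "nat \<Rightarrow> (nat \<Rightarrow> real) \<Rightarrow> real \<Rightarrow> (nat \<Rightarrow> real) \<Rightarrow> (nat \<Rightarrow> nat) \<Rightarrow> (nat \<Rightarrow> real)
    \<Rightarrow> (nat \<Rightarrow> real) \<Rightarrow> real \<Rightarrow> nat \<Rightarrow> 'w measure \<Rightarrow> ('w \<Rightarrow> real) \<Rightarrow> ('w \<Rightarrow> real)
    \<Rightarrow> (nat \<Rightarrow> nat \<Rightarrow> 'w \<Rightarrow> real \<times> real) \<Rightarrow> (nat \<Rightarrow> nat \<Rightarrow> 'w \<Rightarrow> real) \<Rightarrow> bool" where
  "sir_model K lam lu P Mn Bs al eps k M X G p V \<longleftrightarrow>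
     (let Om = Omg P Mn Bs in
       prob_space M \<and>
       distributed M lborel X (\<lambda>x. ennreal (servDens K lam Om al eps k x)) \<and>
       distributed M lborel G (\<lambda>x. ennreal (erlang_density (Mn k - 1) 1 x)) \<and>
       (\<forall>j\<in>{1..K}. hppp M (actA K lam lu Om al eps j * lam j) (p j)) \<and>
       (\<forall>j\<in>{1..K}. \<forall>n. distributed M lborel (V j n) (\<lambda>x. ennreal (exponential_density 1 x))) \<and>
       prob_space.indep_sets M (comp_sets M X G p V) (comp_idx K))"

end

theory Submission
  imports Defs "HOL-Real_Asymp.Real_Asymp"
begin

lemma poisson_mean: fixes x::real shows "(\<lambda>m. real m * (exp (-x) * x^m / fact m)) sums x"
proof -
  have "(\<lambda>m. x^m / fact m) sums exp x" using exp_converges[of x] by (simp add: scaleR_conv_of_real divide_inverse mult.commute)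
  then have "(\<lambda>m. exp(-x) * x * (x^m / fact m)) sums (exp (-x) * x * exp x)" by (rule sums_mult)
  then have "(\<lambda>m. exp(-x) * x * (x^m / fact m)) sums x" by (simp add: exp_minus field_simps)
  then have "(\<lambda>m. real (Suc m) * (exp (-x) * x^(Suc m) / fact (Suc m))) sums x"
    by (simp add: field_simps fact_Suc del: of_nat_Suc)
  then show ?thesis using sums_Suc_iff[of "\<lambda>m. real m * (exp (-x) * x^m / fact m)" x] by simp
qed

lemma area: fixes c::real assumes "0 \<le> c" shows "measure lborel (cbox (-c,-c) (c,c) :: (real\<times>real) set) = (2*c)^2"
  using assms by (simp add: measure_lborel_cbox_eq Basis_prod_def power2_eq_square inner_prod_def)

lemma suminf_indicator_card:
  assumes "finite S" shows "(\<Sum>n. indicator S n :: ennreal) = of_nat (card S)"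
  using assms by (subst suminf_finite[of S]) auto

lemma hppp_count:
  assumes P: "prob_space M" and H: "hppp M mu p" and B: "B \<in> sets borel" "bounded B"
  shows "(\<integral>\<^sup>+\<omega>. (\<Sum>n. indicator B (p n \<omega>) :: ennreal) \<partial>M) = ennreal (mu * measure lborel B)"
    and "0 \<le> mu * measure lborel B"
proof -
  interpret prob_space M by fact
  define x where "x = mu * measure lborel B"
  define c where "c \<omega> = card {n. p n \<omega> \<in> B}" for \<omega>
  have pm[measurable]: "\<And>n. p n \<in> M \<rightarrow>\<^sub>M borel" using H unfolding hppp_def by auto
  have fin: "\<And>\<omega>. \<omega> \<in> space M \<Longrightarrow> finite {n. p n \<omega> \<in> B}" using H B unfolding hppp_def by auto
  have pois: "\<And>m. measure M {\<omega>\<in>space M. c \<omega> = m} = exp (-x) * x^m / fact m"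
    using H B unfolding hppp_def x_def c_def by auto
  have "0 \<le> exp (-x) * x^1 / fact 1" using pois[of 1] by (metis measure_nonneg)
  then show x0: "0 \<le> mu * measure lborel B" unfolding x_def by (simp add: zero_le_mult_iff)
  define f where "f \<omega> = (\<Sum>n. indicator B (p n \<omega>) :: ennreal)" for \<omega>
  have fm[measurable]: "f \<in> borel_measurable M" unfolding f_def using B(1) by measurable
  have fc: "f \<omega> = of_nat (c \<omega>)" if "\<omega> \<in> space M" for \<omega>
  proof -
    have "f \<omega> = (\<Sum>n. indicator {n. p n \<omega> \<in> B} n)" unfolding f_def by (simp add: indicator_def)
    then show ?thesis using fin[OF that] suminf_indicator_card c_def by simp
  qed
  have sets_eq: "{\<omega>\<in>space M. c \<omega> = m} = {\<omega>\<in>space M. f \<omega> = of_nat m}" for m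
    using fc by auto
  have sm[measurable]: "{\<omega>\<in>space M. c \<omega> = m} \<in> sets M" for m
    unfolding sets_eq by measurable
  have "(\<integral>\<^sup>+\<omega>. f \<omega> \<partial>M) = (\<integral>\<^sup>+\<omega>. (\<Sum>m. of_nat m * indicator {\<omega>\<in>space M. c \<omega> = m} \<omega>) \<partial>M)"
  proof (rule nn_integral_cong)
    fix \<omega> assume w: "\<omega> \<in> space M"
    have "(\<Sum>m. of_nat m * indicator {\<omega>\<in>space M. c \<omega> = m} \<omega> :: ennreal) = of_nat (c \<omega>)"
      using w by (subst suminf_finite[of "{c \<omega>}"]) auto
    then show "f \<omega> = (\<Sum>m. of_nat m * indicator {\<omega>\<in>space M. c \<omega> = m} \<omega>)" using fc[OF w] by simp
  qed
  also have "\<dots> = (\<Sum>m. \<integral>\<^sup>+\<omega>. of_nat m * indicator {\<omega>\<in>space M. c \<omega> = m} \<omega> \<partial>M)"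
    by (rule nn_integral_suminf) measurable
  also have "\<dots> = (\<Sum>m. ennreal (real m * (exp (-x) * x^m / fact m)))"
    apply (simp add: nn_integral_cmult emeasure_eq_measure pois ennreal_of_nat_eq_real_of_nat)
    apply (rule suminf_cong)
    apply (subst ennreal_mult[symmetric])
    using x0 by (auto simp: x_def)
  also have "\<dots> = ennreal x"
    using x0 by (intro suminf_ennreal_eq poisson_mean) (auto simp: x_def)
  finally show "(\<integral>\<^sup>+\<omega>. (\<Sum>n. indicator B (p n \<omega>) :: ennreal) \<partial>M) = ennreal (mu * measure lborel B)"
    unfolding f_def x_def .
qed

lemma ennreal_term_le: "(f n :: ennreal) \<le> (\<Sum>n. f n)"
  by (rule order_trans[OF _ sum_le_suminf[of f "{n}"]]) auto

lemma indep_prod_nn_integral: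
  assumes P: "prob_space M" and E: "E \<in> sets M" and V[measurable]: "V \<in> borel_measurable M"
    and ind: "\<forall>a\<in>{E, space M - E}. \<forall>B\<in>sets borel.
       measure M (a \<inter> (V -` B \<inter> space M)) = measure M a * measure M (V -` B \<inter> space M)"
  shows "(\<integral>\<^sup>+\<omega>. indicator E \<omega> * ennreal (V \<omega>) \<partial>M) = emeasure M E * (\<integral>\<^sup>+\<omega>. ennreal (V \<omega>) \<partial>M)"
proof -
  interpret prob_space M by fact
  define X where "X = (\<lambda>b::bool. if b then (\<lambda>\<omega>. indicator E \<omega> :: ennreal) else (\<lambda>\<omega>. ennreal (V \<omega>)))"
  have rv: "random_variable borel (X i)" for i unfolding X_def using E by (cases i) auto
  have FA: "X True -` A \<inter> space M \<in> {{}, E, space M - E, space M}" for A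
  proof -
    have "X True -` A \<inter> space M = (if 1 \<in> A then E else {}) \<union> (if 0 \<in> A then space M - E else {})"
      using sets.sets_into_space[OF E] unfolding X_def by (auto simp: indicator_def of_bool_def split: if_splits)
    then show ?thesis using sets.sets_into_space[OF E] by (auto split: if_splits)
  qed
  have ind2: "measure M (a \<inter> (V -` B \<inter> space M)) = measure M a * measure M (V -` B \<inter> space M)"
    if "a \<in> {{}, E, space M - E, space M}" "B \<in> sets borel" for a B
  proof -
    have "V -` B \<inter> space M \<subseteq> space M" by auto
    then show ?thesis using that ind by (auto simp: Int_absorb1 prob_space)
  qed
  have iset: "indep_set {X True -` A \<inter> space M | A. A \<in> sets borel} {X False -` A \<inter> space M | A. A \<in> sets borel}"
    unfolding indep_sets2_eq
  proof (intro conjI ballI)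
    show "{X True -` A \<inter> space M | A. A \<in> sets borel} \<subseteq> events" using rv[of True] by auto
    show "{X False -` A \<inter> space M | A. A \<in> sets borel} \<subseteq> events" using rv[of False] by auto
    fix a b assume a: "a \<in> {X True -` A \<inter> space M | A. A \<in> sets borel}"
      and b: "b \<in> {X False -` A \<inter> space M | A. A \<in> sets borel}"
    from b obtain B where B: "B \<in> sets (borel :: ennreal measure)" "b = X False -` B \<inter> space M" by auto
    have bV: "b = V -` (ennreal -` B) \<inter> space M" using B unfolding X_def by auto
    have eB: "ennreal -` B \<in> sets borel" 
    proof -
      have "ennreal \<in> borel_measurable borel" by measurable
      from measurable_sets[OF this B(1)] show ?thesis by simp
    qed
    from a obtain A where "a = X True -` A \<inter> space M" by auto
    then have "a \<in> {{}, E, space M - E, space M}" using FA by auto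
    then show "prob (a \<inter> b) = prob a * prob b" using ind2 eB unfolding bV by auto
  qed
  have "indep_vars (\<lambda>_. borel) X UNIV"
    unfolding indep_vars_def2
  proof (intro conjI ballI rv)
    have eq: "(\<lambda>i. {X i -` A \<inter> space M | A. A \<in> sets borel}) =
      case_bool {X True -` A \<inter> space M | A. A \<in> sets borel} {X False -` A \<inter> space M | A. A \<in> sets borel}"
      by (rule ext) (simp split: bool.split)
    show "indep_sets (\<lambda>i. {X i -` A \<inter> space M | A. A \<in> sets borel}) UNIV"
      using iset unfolding eq indep_set_def .
  qed
  from indep_vars_nn_integral[OF _ this] have
    "(\<integral>\<^sup>+\<omega>. (\<Prod>i\<in>UNIV. X i \<omega>) \<partial>M) = (\<Prod>i\<in>UNIV. \<integral>\<^sup>+\<omega>. X i \<omega> \<partial>M)" by simp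
  then show ?thesis using E by (simp add: UNIV_bool X_def nn_integral_indicator mult.commute)
qed

lemma indep_pair:
  assumes "prob_space M" "prob_space.indep_sets M F I" "i \<in> I" "j \<in> I" "i \<noteq> j" "a \<in> F i" "b \<in> F j"
  shows "measure M (a \<inter> b) = measure M a * measure M b"
proof -
  interpret prob_space M by fact
  have "prob (\<Inter>k\<in>{i,j}. (\<lambda>k. if k = i then a else b) k) = (\<Prod>k\<in>{i,j}. prob ((\<lambda>k. if k = i then a else b) k))"
    by (rule indep_setsD[OF assms(2)]) (use assms in auto)
  then show ?thesis using assms(5) by (auto simp: Int_commute)
qed

lemma exp_mean:
  assumes "distributed M lborel V (\<lambda>x. ennreal (exponential_density 1 x))"
  shows "(\<integral>\<^sup>+\<omega>. ennreal (V \<omega>) \<partial>M) = 1"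
proof -
  have "(\<integral>\<^sup>+\<omega>. ennreal (V \<omega>) \<partial>M) = (\<integral>\<^sup>+x. ennreal (exponential_density 1 x) * ennreal x \<partial>lborel)"
    by (rule distributed_nn_integral[OF assms, symmetric]) measurable
  also have "\<dots> = (\<integral>\<^sup>+x. ennreal (erlang_density 0 1 x * x ^ 1) \<partial>lborel)"
    by (intro nn_integral_cong) (simp add: ennreal_mult' erlang_density_def)
  also have "\<dots> = 1" by (subst nn_integral_erlang_ith_moment) auto
  finally show ?thesis .
qed

lemma ennreal_suminf_swap_le: "(\<Sum>n. \<Sum>m. f n m :: ennreal) \<le> (\<Sum>m. \<Sum>n. f n m)"
proof (rule suminf_le_const)
  fix N
  have "(\<Sum>n<N. \<Sum>m. f n m) = (\<Sum>m. \<Sum>n<N. f n m)" by (rule suminf_sum[symmetric]) auto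
  also have "\<dots> \<le> (\<Sum>m. \<Sum>n. f n m)"
    by (intro suminf_le allI sum_le_suminf) auto
  finally show "(\<Sum>n<N. \<Sum>m. f n m) \<le> (\<Sum>m. \<Sum>n. f n m)" .
qed auto

lemma ennreal_suminf_swap: "(\<Sum>n. \<Sum>m. f n m :: ennreal) = (\<Sum>m. \<Sum>n. f n m)"
  by (rule antisym) (rule ennreal_suminf_swap_le)+

definition smax :: "real \<times> real \<Rightarrow> real" where "smax x = max \<bar>fst x\<bar> \<bar>snd x\<bar>"
definition Ann :: "nat \<Rightarrow> (real \<times> real) set" where "Ann m = {x. 2^m \<le> smax x \<and> smax x < 2^Suc m}"

lemma smax_cont: "continuous_on UNIV smax" unfolding smax_def by (intro continuous_intros)

lemma smax_meas[measurable]: "smax \<in> borel_measurable borel"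
  using smax_cont by (simp add: borel_measurable_continuous_onI)

lemma Ann_sets[measurable]: "Ann m \<in> sets borel"
proof -
  have "Ann m = {x \<in> space borel. 2^m \<le> smax x \<and> smax x < 2^Suc m}" unfolding Ann_def by auto
  also have "\<dots> \<in> sets borel" by measurable
  finally show ?thesis .
qed

lemma Ann_box: "Ann m \<subseteq> cbox (-(2^Suc m), -(2^Suc m)) (2^Suc m, 2^Suc m)"
  by (auto simp: Ann_def smax_def cbox_def Basis_prod_def inner_prod_def abs_less_iff)

lemma Ann_bounded: "bounded (Ann m)"
  using Ann_box bounded_cbox bounded_subset by blast

lemma Ann_measure: "measure lborel (Ann m) \<le> 16 * 4^m"
proof -
  have "measure lborel (Ann m) \<le> measure lborel (cbox (-(2^Suc m), -(2^Suc m)) (2^Suc m, 2^Suc m) :: (real\<times>real) set)"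
    by (rule measure_mono_fmeasurable[OF Ann_box]) (auto intro: fmeasurableI simp: emeasure_lborel_cbox_finite)
  also have "\<dots> = (2 * 2^Suc m)^2" by (rule area) simp
  also have "\<dots> = 16 * 4^m" 
  proof -
    have "(2::real)^m * 2^m = 4^m" by (metis power_mult_distrib mult_2 numeral_Bit0 mult.commute numeral_times_numeral semiring_norm(2) semiring_norm(6) num_double)
    then show ?thesis by (simp add: power2_eq_square field_simps)
  qed
  finally show ?thesis .
qed

lemma norm_ge_smax: "smax x \<le> norm x"
proof -
  obtain a b where x: "x = (a,b)" by (cases x)
  have "\<bar>a\<bar> \<le> sqrt (a^2 + b^2)" "\<bar>b\<bar> \<le> sqrt (a^2 + b^2)"
    by (simp_all add: real_le_rsqrt)
  then show ?thesis by (simp add: x smax_def norm_Pair)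
qed

lemma pointwise_ann:
  fixes c v al :: real and x :: "real \<times> real"
  assumes c: "0 \<le> c" and al: "0 < al" and s1: "1 < smax x"
  shows "ennreal (c * v * norm x powr (-al)) \<le> (\<Sum>m. ennreal ((2 powr (-al))^m) * (indicator (Ann m) x * ennreal (c * v)))"
proof (cases "0 \<le> v")
  case False
  then have "c * v * norm x powr (-al) \<le> 0" using c by (simp add: mult_nonneg_nonpos2 mult_nonneg_nonpos)
  then have "ennreal (c * v * norm x powr (-al)) = 0" by (simp add: ennreal_eq_0_iff)
  then show ?thesis by simp
next
  case True
  define m where "m = nat \<lfloor>log 2 (smax x)\<rfloor>"
  have lpos: "0 \<le> log 2 (smax x)" using s1 by simp
  have fl: "\<lfloor>log 2 (smax x)\<rfloor> = int m" using lpos unfolding m_def by simp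
  from iffD1[OF floor_log_eq_powr_iff fl] s1
  have b: "2 powr real m \<le> smax x" "smax x < 2 powr (real m + 1)" by auto
  have xin: "x \<in> Ann m" using b unfolding Ann_def by (simp add: powr_realpow[symmetric] powr_add)
  have "norm x powr (-al) \<le> smax x powr (-al)"
    by (rule powr_mono2') (use al s1 norm_ge_smax in auto)
  also have "\<dots> \<le> (2 powr real m) powr (-al)"
    by (rule powr_mono2') (use al b in auto)
  also have "\<dots> = (2 powr (-al))^m" by (simp add: powr_powr powr_realpow[symmetric] mult.commute)
  finally have le: "norm x powr (-al) \<le> (2 powr (-al))^m" .
  have "c * v * norm x powr (-al) \<le> (2 powr (-al))^m * (c * v)"
    using le True c by (simp add: mult.commute mult_left_mono)
  then have "ennreal (c * v * norm x powr (-al)) \<le> ennreal ((2 powr (-al))^m) * (indicator (Ann m) x * ennreal (c * v))"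
    using xin True c by (simp add: ennreal_mult'[symmetric] ennreal_leI)
  also have "\<dots> \<le> (\<Sum>m. ennreal ((2 powr (-al))^m) * (indicator (Ann m) x * ennreal (c * v)))"
    by (rule ennreal_term_le)
  finally show ?thesis .
qed

lemma far_bound:
  fixes p :: "nat \<Rightarrow> 'w \<Rightarrow> real \<times> real" and V :: "nat \<Rightarrow> 'w \<Rightarrow> real"
  assumes P: "prob_space M" and H: "hppp M mu p"
    and Vd: "\<And>n. distributed M lborel (V n) (\<lambda>x. ennreal (exponential_density 1 x))"
    and ind: "\<And>n A B. A \<in> sets borel \<Longrightarrow> B \<in> sets borel \<Longrightarrow>
       measure M ({\<omega>\<in>space M. p n \<omega> \<in> A} \<inter> (V n -` B \<inter> space M))
        = measure M {\<omega>\<in>space M. p n \<omega> \<in> A} * measure M (V n -` B \<inter> space M)"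
    and c: "0 \<le> c" and al: "2 < al"
  shows "(\<integral>\<^sup>+\<omega>. (\<Sum>n. if 1 < smax (p n \<omega>) then ennreal (c * V n \<omega> * norm (p n \<omega>) powr (-al)) else 0) \<partial>M)
     \<le> ennreal (c * mu * 16 / (1 - 2 powr (2 - al)))"
proof -
  interpret prob_space M by fact
  have pm[measurable]: "\<And>n. p n \<in> M \<rightarrow>\<^sub>M borel" using H unfolding hppp_def by auto
  have Vm[measurable]: "V n \<in> borel_measurable M" for n
    using distributed_measurable[OF Vd[of n]] measurable_cong_sets[OF refl sets_lborel] by blast
  have mu0: "0 \<le> mu"
  proof -
    have "0 \<le> mu * measure lborel (cbox (-1,-1) (1,1) :: (real\<times>real) set)"
      by (rule hppp_count(2)[OF P H]) auto
    then show ?thesis by (simp add: area)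
  qed
  define q where "q = 2 powr (-al)"
  define h where "h m n \<omega> = ennreal (q^m) * (indicator (Ann m) (p n \<omega>) * ennreal (c * V n \<omega>))" for m n \<omega>
  have hm[measurable]: "(\<lambda>\<omega>. h m n \<omega>) \<in> borel_measurable M" for m n unfolding h_def by measurable
  have "(\<integral>\<^sup>+\<omega>. (\<Sum>n. if 1 < smax (p n \<omega>) then ennreal (c * V n \<omega> * norm (p n \<omega>) powr (-al)) else 0) \<partial>M)
      \<le> (\<integral>\<^sup>+\<omega>. (\<Sum>m. \<Sum>n. h m n \<omega>) \<partial>M)"
  proof (rule nn_integral_mono)
    fix \<omega>
    have "(\<Sum>n. if 1 < smax (p n \<omega>) then ennreal (c * V n \<omega> * norm (p n \<omega>) powr (-al)) else 0)
       \<le> (\<Sum>n. \<Sum>m. h m n \<omega>)"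
      by (intro suminf_le allI) (auto simp: h_def q_def intro!: pointwise_ann c al[THEN less_trans[rotated], of 0])
    also have "\<dots> = (\<Sum>m. \<Sum>n. h m n \<omega>)" by (rule ennreal_suminf_swap)
    finally show "(\<Sum>n. if 1 < smax (p n \<omega>) then ennreal (c * V n \<omega> * norm (p n \<omega>) powr (-al)) else 0)
       \<le> (\<Sum>m. \<Sum>n. h m n \<omega>)" .
  qed
  also have "\<dots> = (\<Sum>m. \<Sum>n. \<integral>\<^sup>+\<omega>. h m n \<omega> \<partial>M)"
    by (simp add: nn_integral_suminf)
  also have "\<dots> \<le> (\<Sum>m. ennreal (c * mu * 16 * (4 * q)^m))"
  proof (intro suminf_le allI)
    fix m
    define E where "E n = {\<omega>\<in>space M. p n \<omega> \<in> Ann m}" for n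
    have Es[measurable]: "E n \<in> sets M" for n unfolding E_def by measurable
    have hi: "(\<integral>\<^sup>+\<omega>. h m n \<omega> \<partial>M) = ennreal (q^m) * ennreal c * emeasure M (E n)" for n
    proof -
      have "(\<integral>\<^sup>+\<omega>. h m n \<omega> \<partial>M) = (\<integral>\<^sup>+\<omega>. ennreal (q^m) * ennreal c * (indicator (E n) \<omega> * ennreal (V n \<omega>)) \<partial>M)"
        by (intro nn_integral_cong) (auto simp: h_def E_def ennreal_mult' c indicator_def mult_ac)
      also have "\<dots> = ennreal (q^m) * ennreal c * (\<integral>\<^sup>+\<omega>. indicator (E n) \<omega> * ennreal (V n \<omega>) \<partial>M)"
        by (rule nn_integral_cmult) measurable
      also have "(\<integral>\<^sup>+\<omega>. indicator (E n) \<omega> * ennreal (V n \<omega>) \<partial>M) = emeasure M (E n)"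
      proof -
        have "space M - E n = {\<omega>\<in>space M. p n \<omega> \<in> - Ann m}" unfolding E_def by auto
        then have "(\<integral>\<^sup>+\<omega>. indicator (E n) \<omega> * ennreal (V n \<omega>) \<partial>M) = emeasure M (E n) * (\<integral>\<^sup>+\<omega>. ennreal (V n \<omega>) \<partial>M)"
          using ind[of "Ann m"] ind[of "- Ann m"]
          by (intro indep_prod_nn_integral P Es Vm) (auto simp: E_def)
        then show ?thesis using exp_mean[OF Vd] by simp
      qed
      finally show ?thesis .
    qed
    have "(\<Sum>n. emeasure M (E n)) = (\<Sum>n. \<integral>\<^sup>+\<omega>. indicator (Ann m) (p n \<omega>) \<partial>M)"
      by (intro suminf_cong) (auto simp: E_def intro!: nn_integral_indicator[symmetric, THEN trans] nn_integral_cong split: split_indicator)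
    also have "\<dots> = (\<integral>\<^sup>+\<omega>. (\<Sum>n. indicator (Ann m) (p n \<omega>)) \<partial>M)"
      by (rule nn_integral_suminf[symmetric]) measurable
    also have "\<dots> = ennreal (mu * measure lborel (Ann m))"
      by (rule hppp_count(1)[OF P H Ann_sets Ann_bounded])
    finally have sE: "(\<Sum>n. emeasure M (E n)) = ennreal (mu * measure lborel (Ann m))" .
    have "(\<Sum>n. \<integral>\<^sup>+\<omega>. h m n \<omega> \<partial>M) = ennreal (q^m) * ennreal c * (\<Sum>n. emeasure M (E n))"
      by (simp add: hi ennreal_suminf_cmult)
    also have "\<dots> = ennreal (q^m * c * (mu * measure lborel (Ann m)))"
      using sE mu0 c by (simp add: ennreal_mult q_def)
    also have "\<dots> \<le> ennreal (c * mu * 16 * (4 * q)^m)"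
    proof (rule ennreal_leI)
      have "q^m * c * (mu * measure lborel (Ann m)) \<le> q^m * c * (mu * (16 * 4^m))"
        using Ann_measure[of m] mu0 c by (intro mult_left_mono) (auto simp: q_def)
      then show "q^m * c * (mu * measure lborel (Ann m)) \<le> c * mu * 16 * (4 * q)^m"
        by (simp add: power_mult_distrib mult_ac)
    qed
    finally show "(\<Sum>n. \<integral>\<^sup>+\<omega>. h m n \<omega> \<partial>M) \<le> ennreal (c * mu * 16 * (4 * q)^m)" .
  qed auto
  also have "\<dots> = ennreal (c * mu * 16 / (1 - 2 powr (2 - al)))"
  proof -
    have 4: "4 * q = 2 powr (2 - al)" unfolding q_def by (simp add: powr_diff powr_minus divide_inverse)
    have r: "0 \<le> 2 powr (2 - al)" "2 powr (2 - al) < (1::real)"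
      using al powr_less_cancel_iff[of 2 "2-al" 0] by auto
    have "(\<lambda>m. c * mu * 16 * (4 * q)^m) sums (c * mu * 16 * (1 / (1 - 2 powr (2 - al))))"
      unfolding 4 by (intro sums_mult geometric_sums) (use r in auto)
    then show ?thesis using c r mu0
      by (subst suminf_ennreal_eq) (auto simp: 4 intro!: mult_nonneg_nonneg)
  qed
  finally show ?thesis .
qed

lemma near_bound:
  assumes P: "prob_space M" and H: "hppp M mu p" and B: "B \<in> sets borel" "bounded B"
  shows "measure M {\<omega>\<in>space M. \<exists>n. p n \<omega> \<in> B} \<le> mu * measure lborel B"
proof -
  interpret prob_space M by fact
  have pm[measurable]: "\<And>n. p n \<in> M \<rightarrow>\<^sub>M borel" using H unfolding hppp_def by auto
  have Ns[measurable]: "{\<omega>\<in>space M. \<exists>n. p n \<omega> \<in> B} \<in> sets M" using B(1) by measurable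
  have "emeasure M {\<omega>\<in>space M. \<exists>n. p n \<omega> \<in> B} = (\<integral>\<^sup>+\<omega>. indicator {\<omega>\<in>space M. \<exists>n. p n \<omega> \<in> B} \<omega> \<partial>M)"
    by (rule nn_integral_indicator[symmetric]) fact
  also have "\<dots> \<le> (\<integral>\<^sup>+\<omega>. (\<Sum>n. indicator B (p n \<omega>) :: ennreal) \<partial>M)"
  proof (rule nn_integral_mono)
    fix \<omega> assume "\<omega> \<in> space M"
    show "indicator {\<omega>\<in>space M. \<exists>n. p n \<omega> \<in> B} \<omega> \<le> (\<Sum>n. indicator B (p n \<omega>) :: ennreal)"
    proof (cases "\<exists>n. p n \<omega> \<in> B")
      case True
      then obtain n where "p n \<omega> \<in> B" by auto
      then have "indicator {\<omega>\<in>space M. \<exists>n. p n \<omega> \<in> B} \<omega> \<le> (indicator B (p n \<omega>) :: ennreal)"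
        by (simp add: indicator_def)
      also have "\<dots> \<le> (\<Sum>n. indicator B (p n \<omega>))" by (rule ennreal_term_le)
      finally show ?thesis .
    qed (simp add: indicator_def)
  qed
  also have "\<dots> = ennreal (mu * measure lborel B)" by (rule hppp_count(1)[OF P H B])
  finally show ?thesis using hppp_count(2)[OF P H B] by (simp add: emeasure_eq_measure)
qed

lemma sir_facts:
  assumes S: "sir_model K lam lu P Mn Bs al eps k M X G p V"
  defines "Om \<equiv> Omg P Mn Bs"
  shows "prob_space M"
    and "distributed M lborel X (\<lambda>x. ennreal (servDens K lam Om al eps k x))"
    and "distributed M lborel G (\<lambda>x. ennreal (erlang_density (Mn k - 1) 1 x))"
    and "\<And>j. j \<in> {1..K} \<Longrightarrow> hppp M (actA K lam lu Om al eps j * lam j) (p j)"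
    and "\<And>j n. j \<in> {1..K} \<Longrightarrow> distributed M lborel (V j n) (\<lambda>x. ennreal (exponential_density 1 x))"
    and "\<And>j n A B. j \<in> {1..K} \<Longrightarrow> A \<in> sets borel \<Longrightarrow> B \<in> sets borel \<Longrightarrow>
       measure M ({\<omega>\<in>space M. p j n \<omega> \<in> A} \<inter> (V j n -` B \<inter> space M))
        = measure M {\<omega>\<in>space M. p j n \<omega> \<in> A} * measure M (V j n -` B \<inter> space M)"
proof -
  note S' = S[unfolded sir_model_def Let_def, folded Om_def]
  show PS: "prob_space M" using S' by auto
  show "distributed M lborel X (\<lambda>x. ennreal (servDens K lam Om al eps k x))" using S' by auto
  show "distributed M lborel G (\<lambda>x. ennreal (erlang_density (Mn k - 1) 1 x))" using S' by auto
  show "\<And>j. j \<in> {1..K} \<Longrightarrow> hppp M (actA K lam lu Om al eps j * lam j) (p j)" using S' by auto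
  show "\<And>j n. j \<in> {1..K} \<Longrightarrow> distributed M lborel (V j n) (\<lambda>x. ennreal (exponential_density 1 x))" using S' by auto
  fix j n and A :: "(real\<times>real) set" and B :: "real set" assume j: "j \<in> {1..K}" and A: "A \<in> sets borel" and B: "B \<in> sets borel"
  have ind: "prob_space.indep_sets M (comp_sets M X G p V) (comp_idx K)" using S' by auto
  define D where "D = {f \<in> space (PiM UNIV (\<lambda>_::nat. borel :: (real\<times>real) measure)). f n \<in> A}"
  have Ds: "D \<in> sets (PiM UNIV (\<lambda>_. borel))" unfolding D_def using A by measurable
  have "{\<omega>\<in>space M. p j n \<omega> \<in> A} = (\<lambda>\<omega> n. p j n \<omega>) -` D \<inter> space M"
    unfolding D_def by (auto simp: space_PiM)
  then have a: "{\<omega>\<in>space M. p j n \<omega> \<in> A} \<in> comp_sets M X G p V (cP j)"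
    using Ds unfolding comp_sets_def gen_sets_def by auto
  have b: "V j n -` B \<inter> space M \<in> comp_sets M X G p V (cV j n)"
    using B unfolding comp_sets_def gen_sets_def by auto
  show "measure M ({\<omega>\<in>space M. p j n \<omega> \<in> A} \<inter> (V j n -` B \<inter> space M))
        = measure M {\<omega>\<in>space M. p j n \<omega> \<in> A} * measure M (V j n -` B \<inter> space M)"
    by (rule indep_pair[OF PS ind _ _ _ a b]) (use j in \<open>auto simp: comp_idx_def\<close>)
qed

lemma G_small:
  assumes P: "prob_space M" and D: "distributed M lborel G (\<lambda>x. ennreal (erlang_density k 1 x))" and d: "0 \<le> d"
  shows "measure M {\<omega>\<in>space M. G \<omega> \<le> d} \<le> d"
proof -
  interpret prob_space M by fact
  have "measure M {\<omega>\<in>space M. G \<omega> \<le> d} = erlang_CDF k 1 d"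
    using erlang_distributed_le[of G k 1 d] D d by simp
  also have "\<dots> = 1 - (\<Sum>n\<le>k. d^n * exp (-d) / fact n)" using d by (simp add: erlang_CDF_def)
  also have "\<dots> \<le> 1 - exp (-d)"
  proof -
    have "(\<Sum>n\<in>{0}. d^n * exp (-d) / fact n) \<le> (\<Sum>n\<le>k. d^n * exp (-d) / fact n)"
      by (rule sum_mono2) (use d in auto)
    then show ?thesis by simp
  qed
  also have "\<dots> \<le> d" using exp_ge_add_one_self[of "-d"] by simp
  finally show ?thesis .
qed

lemma X_good:
  assumes P: "prob_space M" and D: "distributed M lborel X (\<lambda>x. ennreal (servDens K lam Om al eps k x))"
  shows "measure M {\<omega>\<in>space M. \<not> (0 < X \<omega> \<and> X \<omega> \<le> accR Om al eps k)} = 0"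
proof -
  interpret prob_space M by fact
  let ?A = "- {0<..accR Om al eps k}"
  have "emeasure M (X -` ?A \<inter> space M) = (\<integral>\<^sup>+x. ennreal (servDens K lam Om al eps k x) * indicator ?A x \<partial>lborel)"
    by (rule distributed_emeasure[OF D]) auto
  also have "\<dots> = 0" by (auto simp: servDens_def indicator_def intro!: nn_integral_zero')
  finally have "emeasure M (X -` ?A \<inter> space M) = 0" .
  moreover have "X -` ?A \<inter> space M = {\<omega>\<in>space M. \<not> (0 < X \<omega> \<and> X \<omega> \<le> accR Om al eps k)}" by auto
  ultimately show ?thesis by (simp add: emeasure_eq_measure)
qed

lemma gfun_bounds:
  assumes "\<forall>l\<in>{1..K}. 0 < lam l"
  shows "0 \<le> gfun K lam Om al j r" "gfun K lam Om al j r \<le> 1"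
proof -
  have "0 \<le> (\<Sum>l\<in>{1..K}. lam l * (Om l / Om j) powr (2 / al l) * r powr ((2 / al l) / (2 / al j)))"
    using assms by (intro sum_nonneg mult_nonneg_nonneg) (auto simp: less_imp_le)
  then show "0 \<le> gfun K lam Om al j r" "gfun K lam Om al j r \<le> 1" unfolding gfun_def by auto
qed

lemma int_bounds:
  assumes "\<forall>l\<in>{1..K}. 0 < lam l" and a: "0 \<le> a"
  shows "0 \<le> integral {0..a} (gfun K lam Om al j)" "integral {0..a} (gfun K lam Om al j) \<le> a"
proof -
  have "0 \<le> integral {0..a} (gfun K lam Om al j) \<and> integral {0..a} (gfun K lam Om al j) \<le> a"
  proof (cases "gfun K lam Om al j integrable_on {0..a}")
    case True
    have "0 \<le> integral {0..a} (gfun K lam Om al j)"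
      by (rule integral_nonneg[OF True]) (use gfun_bounds[OF assms(1)] in auto)
    moreover have "integral {0..a} (gfun K lam Om al j) \<le> integral {0..a} (\<lambda>_. 1::real)"
      by (rule integral_le[OF True]) (use gfun_bounds[OF assms(1)] in auto)
    ultimately show ?thesis using a by simp
  next
    case False
    then show ?thesis using a by (simp add: not_integrable_integral)
  qed
  then show "0 \<le> integral {0..a} (gfun K lam Om al j)" "integral {0..a} (gfun K lam Om al j) \<le> a" by auto
qed

lemma actA_bounds:
  assumes "\<forall>l\<in>{1..K}. 0 < lam l" and lu: "0 < lu"
  shows "0 \<le> actA K lam lu Om al eps j" "actA K lam lu Om al eps j \<le> 1"
    "actA K lam lu Om al eps j \<le> 1 - exp (- (pi * lu * (accR Om al eps j)\<^sup>2))"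
proof -
  note ib = int_bounds[OF assms(1), of "(accR Om al eps j)\<^sup>2" Om al j]
  have "0 \<le> pi * lu * integral {0..(accR Om al eps j)\<^sup>2} (gfun K lam Om al j)"
    using ib lu by auto
  then show "0 \<le> actA K lam lu Om al eps j" "actA K lam lu Om al eps j \<le> 1"
    unfolding actA_def by auto
  have "pi * lu * integral {0..(accR Om al eps j)\<^sup>2} (gfun K lam Om al j) \<le> pi * lu * (accR Om al eps j)\<^sup>2"
    using ib lu by (intro mult_left_mono) auto
  then show "actA K lam lu Om al eps j \<le> 1 - exp (- (pi * lu * (accR Om al eps j)\<^sup>2))"
    unfolding actA_def by simp
qed

lemma accR_lim:
  fixes Omj alj :: real
  assumes "0 < Omj" "0 < alj"
  shows "((\<lambda>eps. ((Omj / eps) powr (1 / alj))\<^sup>2) \<longlongrightarrow> 0) at_top"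
proof -
  have "((\<lambda>eps. Omj / eps) \<longlongrightarrow> 0) at_top"
    by (rule tendsto_divide_0[OF tendsto_const filterlim_at_top_imp_at_infinity[OF filterlim_ident]])
  then have "((\<lambda>eps. (Omj / eps) powr (1 / alj)) \<longlongrightarrow> 0) at_top"
    by (rule tendsto_zero_powrI[where b="1/alj"]) (use assms in \<open>auto intro!: eventually_mono[OF eventually_gt_at_top[of 0]]\<close>)
  from tendsto_power[OF this, of 2] show ?thesis by simp
qed

lemma outage_bound:
  fixes K k :: nat and lam P Bs al :: "nat \<Rightarrow> real" and Mn :: "nat \<Rightarrow> nat"
    and lu \<beta> eps :: real and M :: "'w measure" and X G :: "'w \<Rightarrow> real"
    and p :: "nat \<Rightarrow> nat \<Rightarrow> 'w \<Rightarrow> real \<times> real" and V :: "nat \<Rightarrow> nat \<Rightarrow> 'w \<Rightarrow> real"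
  assumes kK: "k \<in> {1..K}"
    and pos: "\<forall>j\<in>{1..K}. 0 < lam j \<and> 0 < P j \<and> 1 \<le> Mn j \<and> 0 < Bs j \<and> 2 < al j"
    and lu: "0 < lu" and beta: "0 < \<beta>" and eps: "0 < eps"
    and SM: "sir_model K lam lu P Mn Bs al eps k M X G p V"
  shows "measure M {\<omega> \<in> space M. ennreal (P k * G \<omega> * X \<omega> powr (- al k))
                 < ennreal \<beta> * interf K P (Omg P Mn Bs) al k p V X \<omega>}
     \<le> 1 / sqrt eps + (\<Sum>j\<in>{1..K}. actA K lam lu (Omg P Mn Bs) al eps j * lam j * 4)
        + \<beta> * (\<Sum>j\<in>{1..K}. P j * lam j * 16 / (1 - 2 powr (2 - al j))) * Omg P Mn Bs k / P k / sqrt eps"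
proof -
  define Om where "Om = Omg P Mn Bs"
  note F = sir_facts[OF SM, folded Om_def]
  interpret prob_space M by (rule F(1))
  have Ompos: "0 < Om j" if "j \<in> {1..K}" for j
  proof -
    have a: "0 < real (Mn j)" "0 < P j" "0 < Bs j" using bspec[OF pos that] by auto
    show ?thesis unfolding Om_def Omg_def using a by simp
  qed
  have pm[measurable]: "p j n \<in> M \<rightarrow>\<^sub>M borel" if "j \<in> {1..K}" for j n
    using F(4)[OF that] unfolding hppp_def by auto
  have Vm[measurable]: "V j n \<in> borel_measurable M" if "j \<in> {1..K}" for j n
    using distributed_measurable[OF F(5)[OF that, of n]] measurable_cong_sets[OF refl sets_lborel] by blast
  have Xm[measurable]: "X \<in> borel_measurable M"
    using distributed_measurable[OF F(2)] measurable_cong_sets[OF refl sets_lborel] by blast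
  have Gm[measurable]: "G \<in> borel_measurable M"
    using distributed_measurable[OF F(3)] measurable_cong_sets[OF refl sets_lborel] by blast
  define \<delta> where "\<delta> = 1 / sqrt eps"
  define t where "t = P k * sqrt eps / Om k"
  define R where "R = accR Om al eps k"
  define B0 where "B0 = (cbox (-1,-1) (1,1) :: (real\<times>real) set)"
  define mu where "mu j = actA K lam lu Om al eps j * lam j" for j
  define r where "r j = 2 powr (2 - al j)" for j
  define Fj where "Fj j \<omega> = (\<Sum>n. if 1 < smax (p j n \<omega>) then ennreal (P j * V j n \<omega> * norm (p j n \<omega>) powr (-al j)) else 0)" for j \<omega>
  have dpos: "0 < \<delta>" and tpos: "0 < t" using eps pos kK Ompos[OF kK] by (auto simp: \<delta>_def t_def)
  define EG where "EG = {\<omega>\<in>space M. G \<omega> \<le> \<delta>}"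
  define EZ where "EZ = {\<omega>\<in>space M. \<not> (0 < X \<omega> \<and> X \<omega> \<le> R)}"
  define N where "N j = {\<omega>\<in>space M. \<exists>n. p j n \<omega> \<in> B0}" for j
  define u where "u \<omega> = ennreal \<beta> * (\<Sum>j\<in>{1..K}. Fj j \<omega>)" for \<omega>
  define EF where "EF = {\<omega>\<in>space M. ennreal t \<le> u \<omega>}"
  have B0s[measurable]: "B0 \<in> sets borel" unfolding B0_def by simp
  have EGs: "EG \<in> sets M" unfolding EG_def by measurable
  have EZs: "EZ \<in> sets M" unfolding EZ_def by measurable
  have Ns: "N j \<in> sets M" if "j \<in> {1..K}" for j unfolding N_def using that by measurable
  have Fjm: "(\<lambda>\<omega>. Fj j \<omega>) \<in> borel_measurable M" if "j \<in> {1..K}" for j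
    unfolding Fj_def using that by measurable
  have um[measurable]: "u \<in> borel_measurable M" unfolding u_def using Fjm by measurable
  have EFs: "EF \<in> sets M" unfolding EF_def by measurable
  have lam_pos: "0 < lam j" "0 < P j" "2 < al j" if "j \<in> {1..K}" for j using bspec[OF pos that] by auto
  have r1: "r j < 1" "0 \<le> r j" if "j \<in> {1..K}" for j
    using lam_pos(3)[OF that] powr_less_cancel_iff[of 2 "2 - al j" 0] unfolding r_def by auto
  define C where "C j = P j * lam j * 16 / (1 - r j)" for j
  have Cnn: "0 \<le> C j" if "j \<in> {1..K}" for j
    using lam_pos[OF that] r1[OF that] unfolding C_def by auto
  let ?Out = "{\<omega> \<in> space M. ennreal (P k * G \<omega> * X \<omega> powr (- al k))
                 < ennreal \<beta> * interf K P Om al k p V X \<omega>}"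
  have smax1: "1 < smax x" if "x \<notin> B0" for x
    using that unfolding B0_def smax_def by (cases x) (auto simp: cbox_Pair_eq abs_le_iff)
  have Rpow: "R powr (- al k) = eps / Om k"
  proof -
    have "R powr (- al k) = (Om k / eps) powr (1 / al k * - al k)"
      unfolding R_def accR_def by (simp add: powr_powr)
    also have "1 / al k * - al k = -1" using lam_pos(3)[OF kK] by simp
    also have "(Om k / eps) powr (-1) = eps / Om k" using Ompos[OF kK] eps by (simp add: powr_neg_one)
    finally show ?thesis .
  qed
  have sub: "?Out \<subseteq> EG \<union> EZ \<union> (\<Union>j\<in>{1..K}. N j) \<union> EF"
  proof
    fix \<omega> assume w: "\<omega> \<in> ?Out"
    then have sp: "\<omega> \<in> space M" and lt: "ennreal (P k * G \<omega> * X \<omega> powr (- al k))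
                 < ennreal \<beta> * interf K P Om al k p V X \<omega>" by auto
    show "\<omega> \<in> EG \<union> EZ \<union> (\<Union>j\<in>{1..K}. N j) \<union> EF"
    proof (rule ccontr)
      assume "\<omega> \<notin> EG \<union> EZ \<union> (\<Union>j\<in>{1..K}. N j) \<union> EF"
      then have Gw: "\<delta> < G \<omega>" and Xw: "0 < X \<omega>" "X \<omega> \<le> R"
        and nb: "\<And>j n. j \<in> {1..K} \<Longrightarrow> p j n \<omega> \<notin> B0" and nu: "\<not> ennreal t \<le> u \<omega>"
        using sp unfolding EG_def EZ_def N_def EF_def by auto
      have "R powr (- al k) \<le> X \<omega> powr (- al k)"
        by (rule powr_mono2') (use Xw lam_pos(3)[OF kK] in auto)
      then have "eps / Om k \<le> X \<omega> powr (- al k)" using Rpow by simp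
      moreover have "t = P k * (\<delta> * (eps / Om k))"
      proof -
        have "\<delta> * eps = sqrt eps" using eps unfolding \<delta>_def by (metis real_div_sqrt less_imp_le times_divide_eq_left mult_1)
        then show ?thesis unfolding t_def by (simp add: field_simps)
      qed
      moreover note xle = calculation(1)
      have "\<delta> * (eps / Om k) \<le> G \<omega> * X \<omega> powr (- al k)"
        by (rule mult_mono) (use Gw dpos xle Ompos[OF kK] eps in auto)
      then have "P k * (\<delta> * (eps / Om k)) \<le> P k * (G \<omega> * X \<omega> powr (- al k))"
        by (rule mult_left_mono) (use lam_pos(2)[OF kK] in auto)
      ultimately have tle: "t \<le> P k * G \<omega> * X \<omega> powr (- al k)"
        by (simp add: mult.assoc)
      have I: "interf K P Om al k p V X \<omega> \<le> (\<Sum>j\<in>{1..K}. Fj j \<omega>)"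
        unfolding interf_def Fj_def
      proof (intro sum_mono suminf_le allI)
        fix j n assume j: "j \<in> {1..K}"
        show "(if drad Om al k j (X \<omega>) < norm (p j n \<omega>) then ennreal (P j * V j n \<omega> * norm (p j n \<omega>) powr - al j) else 0)
          \<le> (if 1 < smax (p j n \<omega>) then ennreal (P j * V j n \<omega> * norm (p j n \<omega>) powr - al j) else 0)"
          using smax1[OF nb[OF j]] by auto
      qed auto
      have "ennreal t \<le> ennreal (P k * G \<omega> * X \<omega> powr (- al k))" using tle by (rule ennreal_leI)
      also have "\<dots> < ennreal \<beta> * interf K P Om al k p V X \<omega>" by (rule lt)
      also have "\<dots> \<le> u \<omega>" unfolding u_def by (rule mult_left_mono[OF I]) auto
      finally show False using nu by simp
    qed
  qed
  have mEG: "measure M EG \<le> \<delta>" unfolding EG_def by (rule G_small[OF F(1) F(3)]) (use dpos in auto)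
  have mEZ: "measure M EZ = 0" unfolding EZ_def R_def by (rule X_good[OF F(1) F(2)])
  have mN: "measure M (N j) \<le> mu j * 4" if j: "j \<in> {1..K}" for j
  proof -
    have "measure M (N j) \<le> (actA K lam lu Om al eps j * lam j) * measure lborel B0"
      unfolding N_def by (rule near_bound[OF F(1) F(4)[OF j]]) (auto simp: B0_def)
    then show ?thesis unfolding mu_def B0_def by (simp add: area)
  qed
  have mNN: "measure M (\<Union>j\<in>{1..K}. N j) \<le> (\<Sum>j\<in>{1..K}. mu j * 4)"
  proof -
    have "measure M (\<Union>j\<in>{1..K}. N j) \<le> (\<Sum>j\<in>{1..K}. measure M (N j))"
      by (rule finite_measure_subadditive_finite) (use Ns in auto)
    also have "\<dots> \<le> (\<Sum>j\<in>{1..K}. mu j * 4)" by (rule sum_mono) (rule mN)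
    finally show ?thesis .
  qed
  have mEF: "measure M EF \<le> 1 / t * (\<beta> * (\<Sum>j\<in>{1..K}. C j))"
  proof -
    have "emeasure M EF \<le> emeasure M {\<omega>\<in>space M. 1 \<le> ennreal (1/t) * u \<omega>}"
    proof (rule emeasure_mono)
      show "EF \<subseteq> {\<omega>\<in>space M. 1 \<le> ennreal (1/t) * u \<omega>}"
      proof
        fix \<omega> assume "\<omega> \<in> EF"
        then have w: "\<omega> \<in> space M" "ennreal t \<le> u \<omega>" unfolding EF_def by auto
        have "1 = ennreal (1/t) * ennreal t" using tpos by (simp add: ennreal_mult[symmetric])
        also have "\<dots> \<le> ennreal (1/t) * u \<omega>" by (rule mult_left_mono[OF w(2)]) auto
        finally show "\<omega> \<in> {\<omega>\<in>space M. 1 \<le> ennreal (1/t) * u \<omega>}" using w by auto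
      qed
    qed measurable
    also have "\<dots> \<le> ennreal (1/t) * (\<integral>\<^sup>+\<omega>. u \<omega> * indicator (space M) \<omega> \<partial>M)"
      using nn_integral_Markov_inequality[of u "space M" M "ennreal (1/t)"] by simp
    also have "(\<integral>\<^sup>+\<omega>. u \<omega> * indicator (space M) \<omega> \<partial>M) = (\<integral>\<^sup>+\<omega>. u \<omega> \<partial>M)"
      by (rule nn_integral_cong) simp
    also have "\<dots> = ennreal \<beta> * (\<Sum>j\<in>{1..K}. \<integral>\<^sup>+\<omega>. Fj j \<omega> \<partial>M)"
    proof -
      have "(\<integral>\<^sup>+\<omega>. (\<Sum>j\<in>{1..K}. Fj j \<omega>) \<partial>M) = (\<Sum>j\<in>{1..K}. \<integral>\<^sup>+\<omega>. Fj j \<omega> \<partial>M)"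
        by (rule nn_integral_sum) (rule Fjm)
      moreover have "(\<integral>\<^sup>+\<omega>. u \<omega> \<partial>M) = ennreal \<beta> * (\<integral>\<^sup>+\<omega>. (\<Sum>j\<in>{1..K}. Fj j \<omega>) \<partial>M)"
        unfolding u_def by (rule nn_integral_cmult) (use Fjm in measurable)
      ultimately show ?thesis by simp
    qed
    also have "\<dots> \<le> ennreal \<beta> * (\<Sum>j\<in>{1..K}. ennreal (C j))"
    proof (intro mult_left_mono sum_mono)
      fix j assume j: "j \<in> {1..K}"
      have "(\<integral>\<^sup>+\<omega>. Fj j \<omega> \<partial>M) \<le> ennreal (P j * (actA K lam lu Om al eps j * lam j) * 16 / (1 - 2 powr (2 - al j)))"
        unfolding Fj_def
        by (rule far_bound[OF F(1) F(4)[OF j] F(5)[OF j] F(6)[OF j]]) (use lam_pos[OF j] in auto)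
      also have "\<dots> \<le> ennreal (C j)"
      proof (rule ennreal_leI)
        have "actA K lam lu Om al eps j * lam j \<le> lam j"
          using actA_bounds(2)[of K lam lu Om al eps j] pos lu lam_pos[OF j] by (simp add: mult_le_cancel_right1)
        then show "P j * (actA K lam lu Om al eps j * lam j) * 16 / (1 - 2 powr (2 - al j)) \<le> C j"
          unfolding C_def using r1[OF j] lam_pos[OF j] unfolding r_def
          by (intro divide_right_mono mult_right_mono mult_left_mono) auto
      qed
      finally show "(\<integral>\<^sup>+\<omega>. Fj j \<omega> \<partial>M) \<le> ennreal (C j)" .
    qed auto
    also have "ennreal (1/t) * (ennreal \<beta> * (\<Sum>j\<in>{1..K}. ennreal (C j))) = ennreal (1 / t * (\<beta> * (\<Sum>j\<in>{1..K}. C j)))"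
    proof -
      have "(\<Sum>j\<in>{1..K}. ennreal (C j)) = ennreal (sum C {1..K})" by (rule sum_ennreal) (rule Cnn)
      moreover have "0 \<le> sum C {1..K}" by (rule sum_nonneg) (rule Cnn)
      ultimately show ?thesis using tpos beta by (simp add: ennreal_mult[symmetric])
    qed
    finally have "emeasure M EF \<le> ennreal (1 / t * (\<beta> * (\<Sum>j\<in>{1..K}. C j)))"
      by (metis mult_left_mono zero_le)
    moreover have "0 \<le> sum C {1..K}" by (rule sum_nonneg) (rule Cnn)
    ultimately show ?thesis using tpos beta by (simp add: emeasure_eq_measure)
  qed
  have "measure M ?Out \<le> measure M (EG \<union> EZ \<union> (\<Union>j\<in>{1..K}. N j) \<union> EF)"
    by (rule finite_measure_mono[OF sub]) (use EGs EZs Ns EFs in auto)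
  also have "\<dots> \<le> measure M EG + measure M EZ + measure M (\<Union>j\<in>{1..K}. N j) + measure M EF"
    using EGs EZs Ns EFs
    by (intro order.trans[OF measure_Un_le] add_mono order.refl) (auto intro: measure_Un_le order.trans[OF measure_Un_le] add_mono)
  also have "\<dots> \<le> \<delta> + 0 + (\<Sum>j\<in>{1..K}. mu j * 4) + 1 / t * (\<beta> * (\<Sum>j\<in>{1..K}. C j))"
    using mEG mEZ mNN mEF by linarith
  also have "\<dots> = 1 / sqrt eps + (\<Sum>j\<in>{1..K}. actA K lam lu (Omg P Mn Bs) al eps j * lam j * 4)
        + \<beta> * (\<Sum>j\<in>{1..K}. P j * lam j * 16 / (1 - 2 powr (2 - al j))) * Omg P Mn Bs k / P k / sqrt eps"
    unfolding \<delta>_def t_def mu_def C_def r_def Om_def by simp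
  finally show ?thesis unfolding Om_def .
qed

lemma actA_lim:
  assumes "\<forall>l\<in>{1..K}. 0 < lam l" "0 < lu" "0 < Om j" "0 < al j"
  shows "((\<lambda>eps. actA K lam lu Om al eps j) \<longlongrightarrow> 0) at_top"
proof (rule tendsto_sandwich[where f="\<lambda>_. 0" and h="\<lambda>eps. 1 - exp (- (pi * lu * (accR Om al eps j)\<^sup>2))"])
  show "\<forall>\<^sub>F eps in at_top. 0 \<le> actA K lam lu Om al eps j" using actA_bounds(1)[OF assms(1,2)] by simp
  show "\<forall>\<^sub>F eps in at_top. actA K lam lu Om al eps j \<le> 1 - exp (- (pi * lu * (accR Om al eps j)\<^sup>2))"
    using actA_bounds(3)[OF assms(1,2)] by simp
  have "((\<lambda>eps. (accR Om al eps j)\<^sup>2) \<longlongrightarrow> 0) at_top"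
    unfolding accR_def by (rule accR_lim) (use assms in auto)
  then have "((\<lambda>eps. 1 - exp (- (pi * lu * (accR Om al eps j)\<^sup>2))) \<longlongrightarrow> 1 - exp (- (pi * lu * 0))) at_top"
    by (intro tendsto_intros)
  then show "((\<lambda>eps. 1 - exp (- (pi * lu * (accR Om al eps j)\<^sup>2))) \<longlongrightarrow> 0) at_top" by simp
qed simp

theorem mainTheorem7:
  fixes K k :: nat and lam P Bs al :: "nat \<Rightarrow> real" and Mn :: "nat \<Rightarrow> nat"
    and lu \<beta> :: real
    and M :: "real \<Rightarrow> 'w measure" and X G :: "real \<Rightarrow> 'w \<Rightarrow> real"
    and p :: "real \<Rightarrow> nat \<Rightarrow> nat \<Rightarrow> 'w \<Rightarrow> real \<times> real"
    and V :: "real \<Rightarrow> nat \<Rightarrow> nat \<Rightarrow> 'w \<Rightarrow> real"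
  assumes "1 \<le> K" and "k \<in> {1..K}"
    and "\<forall>j\<in>{1..K}. 0 < lam j \<and> 0 < P j \<and> 1 \<le> Mn j \<and> 0 < Bs j \<and> 2 < al j"
    and "0 < lu" and "0 < \<beta>"
    and "\<forall>eps>0. sir_model K lam lu P Mn Bs al eps k (M eps) (X eps) (G eps) (p eps) (V eps)"
  shows "((\<lambda>eps. measure (M eps)
            {\<omega> \<in> space (M eps).
               ennreal (P k * G eps \<omega> * X eps \<omega> powr (- al k))
                 < ennreal \<beta> * interf K P (Omg P Mn Bs) al k (p eps) (V eps) (X eps) \<omega>})
          \<longlongrightarrow> 0) at_top"
proof -
  note kK = assms(2) and pos = assms(3) and lu = assms(4) and beta = assms(5) and SM = assms(6)
  define D where "D = \<beta> * (\<Sum>j\<in>{1..K}. P j * lam j * 16 / (1 - 2 powr (2 - al j))) * Omg P Mn Bs k / P k"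
  define bnd where "bnd eps = 1 / sqrt eps + (\<Sum>j\<in>{1..K}. actA K lam lu (Omg P Mn Bs) al eps j * lam j * 4)
        + D / sqrt eps" for eps
  have ev: "\<forall>\<^sub>F eps in at_top. measure (M eps)
            {\<omega> \<in> space (M eps).
               ennreal (P k * G eps \<omega> * X eps \<omega> powr (- al k))
                 < ennreal \<beta> * interf K P (Omg P Mn Bs) al k (p eps) (V eps) (X eps) \<omega>} \<le> bnd eps"
  proof (rule eventually_mono[OF eventually_gt_at_top[of 0]])
    fix eps :: real assume e: "0 < eps"
    show "measure (M eps)
            {\<omega> \<in> space (M eps).
               ennreal (P k * G eps \<omega> * X eps \<omega> powr (- al k))
                 < ennreal \<beta> * interf K P (Omg P Mn Bs) al k (p eps) (V eps) (X eps) \<omega>} \<le> bnd eps"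
      unfolding bnd_def D_def
      by (rule outage_bound[OF kK pos lu beta e]) (use SM e in auto)
  qed
  have lam: "\<forall>l\<in>{1..K}. 0 < lam l" using pos by auto
  have Ompos: "0 < Omg P Mn Bs j" if "j \<in> {1..K}" for j
  proof -
    have a: "0 < real (Mn j)" "0 < P j" "0 < Bs j" using bspec[OF pos that] by auto
    show ?thesis unfolding Omg_def using a by simp
  qed
  have s0: "((\<lambda>eps::real. 1 / sqrt eps) \<longlongrightarrow> 0) at_top" by real_asymp
  have lim: "(bnd \<longlongrightarrow> 0) at_top"
  proof -
    have "((\<lambda>eps. 1 / sqrt eps + (\<Sum>j\<in>{1..K}. actA K lam lu (Omg P Mn Bs) al eps j * lam j * 4)
        + D * (1 / sqrt eps)) \<longlongrightarrow> 0 + (\<Sum>j\<in>{1..K}. 0 * lam j * 4) + D * 0) at_top"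
    proof (intro tendsto_add tendsto_mult tendsto_const s0 tendsto_sum)
      fix j assume j: "j \<in> {1..K}"
      show "((\<lambda>eps. actA K lam lu (Omg P Mn Bs) al eps j) \<longlongrightarrow> 0) at_top"
        by (rule actA_lim[where Om="Omg P Mn Bs", OF lam lu Ompos[OF j]]) (use bspec[OF pos j] in auto)
    qed
    then show ?thesis unfolding bnd_def by simp
  qed
  show ?thesis
    by (rule tendsto_sandwich[OF _ ev tendsto_const lim]) simp
qed
end
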